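(* Let $p$ be a binary word with exactly $2$ runs and length $l\ge3$. For every $n\ge l+2$, $B_{n,p}(M_{n,p}-1)=0$. In particular, $p$ has an internal zero at every $n\ge l+2$.
   Context: $c_p(w)$ is the number of occurrences of $p$ as a (not necessarily consecutive) subsequence of $w$; $B_{n,p}(k)$ is the number of binary words of length $n$ with $c_p(w)=k$; $M_{n,p}=\max\{c_p(w):w\in\{0,1\}^n\}$. A run is a maximal block of consecutive equal letters. $p$ has an internal zero at $n$ if there exist $0\le k_1<k_2<k_3$ with $B_{n,p}(k_1)\ne0$, $B_{n,p}(k_2)=0$, $B_{n,p}(k_3)\ne0$. *)

theory Defs
  imports Main
begin

(* Binary words are lists of booleans (False = 0, True = 1). *)

definition occ :: "bool list \<Rightarrow> bool list \<Rightarrow> nat" where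
  "occ p w = card {I. I \<subseteq> {0..<length w} \<and> card I = length p \<and> nths w I = p}"

definition Bcount :: "nat \<Rightarrow> bool list \<Rightarrow> nat \<Rightarrow> nat" where
  "Bcount n p k = card {w :: bool list. length w = n \<and> occ p w = k}"

definition Mmax :: "nat \<Rightarrow> bool list \<Rightarrow> nat" where
  "Mmax n p = Max {occ p w | w :: bool list. length w = n}"

definition num_runs :: "bool list \<Rightarrow> nat" where
  "num_runs p = length (remdups_adj p)"

definition has_internal_zero :: "bool list \<Rightarrow> nat \<Rightarrow> bool" where
  "has_internal_zero p n \<longleftrightarrow>
     (\<exists>k1 k2 k3. k1 < k2 \<and> k2 < k3 \<and> Bcount n p k1 \<noteq> 0 \<and> Bcount n p k2 = 0 \<and> Bcount n p k3 \<noteq> 0)"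

end

theory Submission
  imports Defs
begin


fun cnt :: "bool list \<Rightarrow> bool list \<Rightarrow> nat" where
  "cnt [] w = 1"
| "cnt (q#p) [] = 0"
| "cnt (q#p) (c#w) = cnt (q#p) w + (if q = c then cnt p w else 0)"

definition S :: "bool list \<Rightarrow> bool list \<Rightarrow> nat set set" where
  "S p w = {I. I \<subseteq> {0..<length w} \<and> card I = length p \<and> nths w I = p}"

lemma S_Nil: "S p [] = (if p = [] then {{}} else {})"
  unfolding S_def by auto

lemma S_emp: "S [] w = {{}}"
  unfolding S_def using finite_subset[of _ "{0..<length w}"] by fastforce

lemma decomp:
  assumes "I \<subseteq> {0..<Suc n}"
  shows "I = Suc ` {j. Suc j \<in> I} \<union> (if 0 \<in> I then {0} else {})"
  using assms by (auto simp: image_iff) (metis not0_implies_Suc)+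

lemma S_Cons: "S (q#p) (c#w) = (image Suc) ` S (q#p) w \<union> (if q = c then (\<lambda>J. insert 0 (Suc ` J)) ` S p w else {})"
proof (intro equalityI subsetI)
  fix I assume I: "I \<in> S (q#p) (c#w)"
  define J where "J = {j. Suc j \<in> I}"
  have sub: "I \<subseteq> {0..<Suc (length w)}" and cI: "card I = Suc (length p)"
     and nI: "nths (c#w) I = q#p" using I by (auto simp: S_def)
  have Isp: "I = Suc ` J \<union> (if 0 \<in> I then {0} else {})" using decomp[OF sub] J_def by simp
  have Jsub: "J \<subseteq> {0..<length w}" using sub J_def by auto
  have fJ: "finite J" using Jsub finite_subset by blast
  have cJ: "card (Suc ` J) = card J" by (simp add: card_image)
  have nJ: "nths (c#w) I = (if 0 \<in> I then [c] else []) @ nths w J" by (simp add: nths_Cons J_def)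
  show "I \<in> (image Suc) ` S (q#p) w \<union> (if q = c then (\<lambda>J. insert 0 (Suc ` J)) ` S p w else {})"
  proof (cases "0 \<in> I")
    case False
    then have "I = Suc ` J" using Isp by simp
    moreover have "J \<in> S (q#p) w" using False nJ nI cI cJ Jsub \<open>I = Suc ` J\<close> by (simp add: S_def)
    ultimately show ?thesis by blast
  next
    case True
    then have I2: "I = insert 0 (Suc ` J)" using Isp by auto
    have "card I = Suc (card J)" using I2 fJ cJ by (simp add: card_insert_if)
    then have "J \<in> S p w" "q = c" using True nJ nI cI Jsub by (auto simp: S_def)
    then show ?thesis using I2 by auto
  qed
next
  fix I assume "I \<in> (image Suc) ` S (q#p) w \<union> (if q = c then (\<lambda>J. insert 0 (Suc ` J)) ` S p w else {})"
  then consider J where "I = Suc ` J" "J \<in> S (q#p) w" | J where "q = c" "I = insert 0 (Suc ` J)" "J \<in> S p w"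
    by (auto split: if_splits)
  then show "I \<in> S (q#p) (c#w)"
  proof cases
    case 1
    have fJ: "finite J" using 1 by (auto simp: S_def intro: finite_subset)
    have e: "{j. Suc j \<in> I} = J" using 1 by auto
    have "nths (c#w) I = nths w J" using 1 e by (simp add: nths_Cons)
    then show ?thesis using 1 by (auto simp: S_def card_image)
  next
    case 2
    have fJ: "finite J" using 2 by (auto simp: S_def intro: finite_subset)
    have e: "{j. Suc j \<in> I} = J" using 2 by auto
    have "nths (c#w) I = c # nths w J" using 2 e by (simp add: nths_Cons)
    moreover have "card I = Suc (card J)" using 2 fJ by (simp add: card_insert_if card_image)
    ultimately show ?thesis using 2 by (auto simp: S_def)
  qed
qed

lemma finS: "finite (S p w)"
  unfolding S_def by (rule finite_subset[of _ "Pow {0..<length w}"]) auto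

lemma occ_cnt: "occ p w = cnt p w"
proof (induction w arbitrary: p)
  case Nil
  have e: "{I::nat set. I = {} \<and> card I = 0} = {{}}" by auto
  show ?case by (cases p) (auto simp: occ_def S_Nil[unfolded S_def], simp only: e, simp)
next
  case (Cons c w)
  show ?case
  proof (cases p)
    case Nil
    then show ?thesis using S_emp[of "c#w"] by (simp add: occ_def S_def)
  next
    case (Cons q p')
    have occS: "\<And>p w. occ p w = card (S p w)" by (simp add: occ_def S_def)
    have d: "(image Suc) ` S (q#p') w \<inter> (\<lambda>J. insert 0 (Suc ` J)) ` S p' w = {}" by auto
    have i0: "inj (image Suc)" by (simp add: inj_image_eq_iff inj_def)
    have i1: "inj (\<lambda>J. insert 0 (Suc ` J))" unfolding inj_def
    proof (intro allI impI)
      fix A B :: "nat set" assume "insert 0 (Suc ` A) = insert 0 (Suc ` B)"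
      then have "Suc ` A = Suc ` B" by (metis Zero_not_Suc image_iff insert_ident)
      then show "A = B" by (simp add: inj_image_eq_iff)
    qed
    have "card (S p (c#w)) = card (S (q#p') w) + (if q = c then card (S p' w) else 0)"
      unfolding Cons S_Cons
      using d finS by (auto simp: card_Un_disjoint card_image inj_on_subset[OF i0] inj_on_subset[OF i1])
    then show ?thesis using Cons.IH occS Cons by simp
  qed
qed



fun ok :: "bool \<Rightarrow> bool list \<Rightarrow> bool" where
  "ok x [] = True"
| "ok x (c#w) = (if c = x then ok x w else x \<notin> set w)"

lemma count_rep[simp]: "count_list (replicate m v) v = m"
  by (induction m) auto

lemma count_rep2[simp]: "u \<noteq> v \<Longrightarrow> count_list (replicate m v) u = 0"
  by (induction m) auto

lemma cnt_rep: "cnt (replicate b y) w = count_list w y choose b"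
proof (induction w arbitrary: b)
  case Nil then show ?case by (cases b) auto
next
  case (Cons c w)
  show ?case
  proof (cases b)
    case 0 then show ?thesis by simp
  next
    case (Suc b')
    have "cnt (replicate b y) (c#w) = cnt (replicate b y) w + (if y = c then cnt (replicate b' y) w else 0)"
      using Suc by simp
    then show ?thesis using Cons.IH[of b] Cons.IH[of b'] Suc by auto
  qed
qed

lemma cnt_zero: "x \<notin> set w \<Longrightarrow> cnt (x#p) w = 0"
  by (induction w) auto

lemma cnt_sorted:
  "cnt (replicate a x @ replicate b (\<not>x)) (replicate k x @ replicate m (\<not>x)) = (k choose a) * (m choose b)"
proof (induction k arbitrary: a)
  case 0
  then show ?case
    by (cases a) (auto simp: cnt_rep cnt_zero)
next
  case (Suc k)
  show ?case
  proof (cases a)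
    case 0
    then show ?thesis by (simp add: cnt_rep)
  next
    case (Suc a')
    then show ?thesis using Suc.IH[of a] Suc.IH[of a'] by (simp add: algebra_simps)
  qed
qed

lemma ok_notin: "x \<notin> set w \<Longrightarrow> ok x w"
  by (induction w) auto

lemma ok_all: "\<forall>c\<in>set w. c = x \<Longrightarrow> ok x w"
  by (induction w) auto

lemma not_ok: "\<not> ok x w \<Longrightarrow> x \<in> set w \<and> (\<not>x) \<in> set w"
proof -
  assume a: "\<not> ok x w"
  have "x \<in> set w" using a ok_notin by blast
  moreover have "\<not> (\<forall>c\<in>set w. c = x)" using a ok_all by blast
  then obtain c where "c \<in> set w" "c \<noteq> x" by blast
  then have "(\<not>x) \<in> set w" by (cases c; cases x) auto
  ultimately show ?thesis by blast
qed

lemma ok_sorted: "ok x w \<Longrightarrow> w = replicate (count_list w x) x @ replicate (count_list w (\<not>x)) (\<not>x)"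
proof (induction w)
  case Nil then show ?case by simp
next
  case (Cons c w)
  show ?case
  proof (cases "c = x")
    case True then show ?thesis using Cons by auto
  next
    case False
    then have "x \<notin> set w" using Cons.prems by simp
    have "\<forall>d\<in>set w. d = (\<not>x)"
    proof
      fix d assume "d \<in> set w"
      with \<open>x \<notin> set w\<close> have "d \<noteq> x" by (cases d; cases x) auto
      then show "d = (\<not>x)" by (cases d; cases x) auto
    qed
    then have "w = replicate (length w) (\<not>x)" by (simp add: replicate_length_same)
    moreover have "count_list w (\<not>x) = length w" using calculation
      by (metis count_rep)
    ultimately show ?thesis using False \<open>x \<notin> set w\<close> by (cases c; cases x) auto
  qed
qed

lemma count_sum: "count_list w x + count_list w (\<not>x) = length w"
  by (induction w) auto

lemma cnt_bound:
  assumes "b \<ge> 1"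
  shows "cnt (replicate a x @ replicate b (\<not>x)) w
     + (if \<not> ok x w \<and> a \<ge> 1 then (count_list w x - 1 choose (a-1)) * (count_list w (\<not>x) - 1 choose (b-1)) else 0)
     \<le> (count_list w x choose a) * (count_list w (\<not>x) choose b)"
proof (induction w arbitrary: a)
  case Nil
  then show ?case using assms by (cases a; cases b) auto
next
  case (Cons c w)
  obtain b' where b: "b = Suc b'" using assms by (cases b) auto
  define kx where "kx = count_list w x"
  define ky where "ky = count_list w (\<not>x)"
  show ?case
  proof (cases "c = x")
    case False
    then have c: "c = (\<not>x)" by auto
    show ?thesis
    proof (cases a)
      case 0
      then show ?thesis using c by (simp add: cnt_rep)
    next
      case (Suc a')
      have IH: "cnt (replicate a x @ replicate b (\<not>x)) w \<le> (kx choose a) * (ky choose b)"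
        using Cons.IH[of a] kx_def ky_def by simp
      have e: "cnt (replicate a x @ replicate b (\<not>x)) (c#w) = cnt (replicate a x @ replicate b (\<not>x)) w"
        using Suc c by simp
      have pen: "(if \<not> ok x (c#w) \<and> a \<ge> 1 then (count_list (c#w) x - 1 choose (a-1)) * (count_list (c#w) (\<not>x) - 1 choose (b-1)) else 0)
          \<le> (kx choose a) * (ky choose b')"
      proof (cases "ok x (c#w)")
        case False
        then have "x \<in> set w" using c by simp
        then have "kx \<ge> 1" unfolding kx_def by (metis count_list_0_iff less_one not_le)
        then obtain j where j: "kx = Suc j" by (cases kx) auto
        have "kx - 1 choose a' \<le> kx choose a" using Suc j by simp
        then show ?thesis using False c Suc b by (simp add: kx_def ky_def)
      qed simp
      have "(count_list (c#w) x choose a) * (count_list (c#w) (\<not>x) choose b)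
            = (kx choose a) * (ky choose b) + (kx choose a) * (ky choose b')"
        using c b by (simp add: kx_def ky_def algebra_simps)
      then show ?thesis using IH e pen by linarith
    qed
  next
    case True
    show ?thesis
    proof (cases a)
      case 0
      then show ?thesis using True by (simp add: cnt_rep)
    next
      case (Suc a')
      have okc: "ok x (c#w) = ok x w" using True by simp
      have e: "cnt (replicate a x @ replicate b (\<not>x)) (c#w) = cnt (replicate a x @ replicate b (\<not>x)) w
                 + cnt (replicate a' x @ replicate b (\<not>x)) w"
        using Suc True by simp
      have hb: "b - 1 = b'" using b by simp
      have ha: "a - 1 = a'" using Suc by simp
      have IH1: "cnt (replicate a x @ replicate b (\<not>x)) w
        + (if \<not> ok x w then (kx - 1 choose a') * (ky - 1 choose b') else 0) \<le> (kx choose a) * (ky choose b)"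
        using Cons.IH[of a] unfolding ha hb kx_def ky_def using Suc by simp
      have IH2: "cnt (replicate a' x @ replicate b (\<not>x)) w
        + (if \<not> ok x w \<and> a' \<ge> 1 then (kx - 1 choose (a'-1)) * (ky - 1 choose b') else 0) \<le> (kx choose a') * (ky choose b)"
        using Cons.IH[of a'] unfolding hb kx_def ky_def .
      have rhs: "(count_list (c#w) x choose a) * (count_list (c#w) (\<not>x) choose b)
            = (kx choose a) * (ky choose b) + (kx choose a') * (ky choose b)"
        using True Suc by (simp add: kx_def ky_def algebra_simps)
      show ?thesis
      proof (cases "ok x w")
        case True
        then show ?thesis using okc e IH1 IH2 rhs by simp
      next
        case False
        then have "x \<in> set w" using not_ok by blast
        then have "kx \<ge> 1" unfolding kx_def by (metis count_list_0_iff less_one not_le)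
        have split: "(kx choose a') = (kx - 1 choose a') + (if a' \<ge> 1 then (kx - 1 choose (a'-1)) else 0)"
        proof (cases a')
          case 0 then show ?thesis by simp
        next
          case (Suc a'')
          obtain j where j: "kx = Suc j" using \<open>kx \<ge> 1\<close> by (cases kx) auto
          show ?thesis using Suc j by simp
        qed
        have "(count_list (c#w) x - 1) = kx" using \<open>c = x\<close> by (simp add: kx_def)
        moreover have "count_list (c#w) (\<not>x) = ky" using \<open>c = x\<close> by (simp add: ky_def)
        ultimately have goal: "?thesis \<longleftrightarrow> cnt (replicate a x @ replicate b (\<not>x)) w
                 + cnt (replicate a' x @ replicate b (\<not>x)) w + (kx choose a') * (ky - 1 choose b')
             \<le> (kx choose a) * (ky choose b) + (kx choose a') * (ky choose b)"
          using okc e rhs False Suc hb by simp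
        have P: "(kx choose a') * (ky - 1 choose b') = (kx - 1 choose a') * (ky - 1 choose b')
             + (if a' \<ge> 1 then (kx - 1 choose (a'-1)) * (ky - 1 choose b') else 0)"
          by (subst split) (simp add: algebra_simps)
        have I1: "cnt (replicate a x @ replicate b (\<not>x)) w + (kx - 1 choose a') * (ky - 1 choose b') \<le> (kx choose a) * (ky choose b)"
          using IH1 False by simp
        have I2: "cnt (replicate a' x @ replicate b (\<not>x)) w
          + (if a' \<ge> 1 then (kx - 1 choose (a'-1)) * (ky - 1 choose b') else 0) \<le> (kx choose a') * (ky choose b)"
          using IH2 False by simp
        show ?thesis unfolding goal using P I1 I2 by linarith
      qed
    qed
  qed
qed



lemma mono_down:
  fixes g :: "nat \<Rightarrow> int"
  assumes "\<forall>j\<ge>k. g (Suc j) \<le> g j" "k \<le> i" shows "g i \<le> g k"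
  using assms(2)
proof (induction i rule: dec_induct)
  case base then show ?case by simp
next
  case (step i) then show ?case using assms(1) by (meson order_trans)
qed

lemma mono_up:
  fixes g :: "nat \<Rightarrow> int"
  assumes "\<forall>j<i. g j \<le> g (Suc j)" "k \<le> i" shows "g k \<le> g i"
  using assms(2,1)
proof (induction i rule: dec_induct)
  case base then show ?case by simp
next
  case (step i) then show ?case by (meson less_SucI lessI order_trans)
qed

lemma seq_abs:
  fixes g :: "nat \<Rightarrow> int"
  assumes step1: "\<And>k. g (Suc k) - g k \<noteq> 1" and step2: "\<And>k. g (Suc k) - g k \<noteq> -1"
    and sign: "\<And>j k. j \<le> k \<Longrightarrow> g (Suc j) < g j \<Longrightarrow> g (Suc k) \<le> g k"
    and bound: "\<And>k. g k \<le> M" and att: "g ks = M"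
  shows "g k \<noteq> M - 1"
proof -
  have L: "\<forall>k. ks - k = d \<longrightarrow> k < ks \<longrightarrow> g k \<noteq> M - 1" for d
  proof (induction d)
    case 0 then show ?case by auto
  next
    case (Suc d)
    show ?case
    proof (intro allI impI notI)
      fix k assume k: "ks - k = Suc d" "k < ks" "g k = M - 1"
      consider "g (Suc k) - g k > 0" | "g (Suc k) - g k = 0" | "g (Suc k) - g k < 0" by linarith
      then show False
      proof cases
        case 1
        then have "g (Suc k) - g k \<ge> 2" using step1[of k] by linarith
        then show False using bound[of "Suc k"] k by linarith
      next
        case 2
        then have "Suc k \<noteq> ks" using att k by auto
        then show False using Suc.IH k 2 by auto
      next
        case 3
        then have "\<forall>j\<ge>k. g (Suc j) \<le> g j" using sign by auto
        then have "g ks \<le> g k" using mono_down[of k g ks] k by auto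
        then show False using att k by linarith
      qed
    qed
  qed
  have R: "\<forall>k. k - ks = d \<longrightarrow> ks < k \<longrightarrow> g k \<noteq> M - 1" for d
  proof (induction d)
    case 0 then show ?case by auto
  next
    case (Suc d)
    show ?case
    proof (intro allI impI notI)
      fix k assume k: "k - ks = Suc d" "ks < k" "g k = M - 1"
      then obtain k0 where k0: "k = Suc k0" by (cases k) auto
      consider "g (Suc k0) - g k0 > 0" | "g (Suc k0) - g k0 = 0" | "g (Suc k0) - g k0 < 0" by linarith
      then show False
      proof cases
        case 3
        then have "g (Suc k0) - g k0 \<le> -2" using step2[of k0] by linarith
        moreover have "g (Suc k0) = M - 1" using k k0 by simp
        ultimately show False using bound[of k0] by linarith
      next
        case 2
        then have "k0 \<noteq> ks" using att k k0 by auto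
        moreover have "k0 - ks = d" "ks < k0" using k k0 calculation by auto
        moreover have "g k0 = M - 1" using k k0 2 by simp
        ultimately show False using Suc.IH by blast
      next
        case 1
        have "\<forall>j<k. g j \<le> g (Suc j)"
        proof (intro allI impI)
          fix j assume "j < k"
          then have "j \<le> k0" using k0 by auto
          show "g j \<le> g (Suc j)"
          proof (rule ccontr)
            assume "\<not> g j \<le> g (Suc j)"
            then have "g (Suc k0) \<le> g k0" using sign[OF \<open>j \<le> k0\<close>] by auto
            then show False using 1 by linarith
          qed
        qed
        then have "g ks \<le> g k" using mono_up[of k g ks] k by auto
        then show False using att k by linarith
      qed
    qed
  qed
  show ?thesis
  proof (cases k ks rule: linorder_cases)
    case less then show ?thesis using L by blast
  next
    case equal then show ?thesis using att by simp
  next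
    case greater then show ?thesis using R by blast
  qed
qed



lemma binom_ge: "1 \<le> j \<Longrightarrow> j < N \<Longrightarrow> N \<le> N choose j"
proof (induction N arbitrary: j)
  case 0 then show ?case by simp
next
  case (Suc N0)
  show ?case
  proof (cases "j = N0")
    case True then show ?thesis by simp
  next
    case False
    then have "j < N0" using Suc by simp
    obtain j' where j: "j = Suc j'" using Suc by (cases j) auto
    have "N0 \<le> N0 choose j" using Suc.IH Suc.prems \<open>j < N0\<close> by simp
    moreover have "0 < N0 choose j'" using j \<open>j < N0\<close> by (intro zero_less_binomial) simp
    moreover have "Suc N0 choose j = (N0 choose j') + (N0 choose j)" using j by simp
    ultimately show ?thesis by linarith
  qed
qed

lemma absorb_int: "int (Suc a') * int (k choose Suc a') = (int k - int a') * int (k choose a')"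
proof (cases k)
  case 0 then show ?thesis by (cases a') auto
next
  case (Suc n)
  have e1: "Suc a' * (Suc n choose Suc a') = Suc n * (n choose a')" by (rule Suc_times_binomial)
  have e2: "(Suc n - a') * (Suc n choose a') = Suc n * (n choose a')" using binomial_absorb_comp[of "Suc n" a'] by simp
  show ?thesis
  proof (cases "a' \<le> Suc n")
    case True
    then have "int (Suc n - a') = int (Suc n) - int a'" by simp
    then show ?thesis using e1 e2 Suc by (metis of_nat_mult)
  next
    case False
    then show ?thesis using Suc by (simp add: binomial_eq_0)
  qed
qed

definition Gf :: "nat \<Rightarrow> nat \<Rightarrow> nat \<Rightarrow> nat \<Rightarrow> int" where
  "Gf a b n k = int ((k choose a) * ((n - k) choose b))"

definition Lf :: "nat \<Rightarrow> nat \<Rightarrow> nat \<Rightarrow> nat \<Rightarrow> int" where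
  "Lf a' b' n k = int (Suc a') * (int (n - k - 1) - int b') - int (Suc b') * (int k - int a')"

lemma Gf_big: "n \<le> k \<Longrightarrow> Gf a (Suc b') n k = 0"
  by (simp add: Gf_def)

lemma diff_formula:
  assumes "k < n"
  shows "Gf (Suc a') (Suc b') n (Suc k) - Gf (Suc a') (Suc b') n k
     = int (k choose a') * int ((n - k - 1) choose Suc b') - int (k choose Suc a') * int ((n - k - 1) choose b')"
proof -
  define m where "m = n - k - 1"
  have nk: "n - k = Suc m" "n - Suc k = m" using assms m_def by auto
  show ?thesis unfolding Gf_def nk m_def[symmetric] by (simp add: algebra_simps)
qed

lemma ident:
  assumes "k < n"
  shows "int (Suc a) * int (Suc b) * (Gf (Suc a) (Suc b) n (Suc k) - Gf (Suc a) (Suc b) n k)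
     = int (k choose a) * int ((n - k - 1) choose b) * Lf a b n k"
proof -
  define m where "m = n - k - 1"
  have A: "int (Suc a) * int (k choose Suc a) = (int k - int a) * int (k choose a)" by (rule absorb_int)
  have B: "int (Suc b) * int (m choose Suc b) = (int m - int b) * int (m choose b)" by (rule absorb_int)
  have "int (Suc a) * int (Suc b) * (Gf (Suc a) (Suc b) n (Suc k) - Gf (Suc a) (Suc b) n k)
      = int (Suc a) * int (k choose a) * (int (Suc b) * int (m choose Suc b))
        - int (Suc b) * int (m choose b) * (int (Suc a) * int (k choose Suc a))"
    unfolding diff_formula[OF assms] m_def[symmetric] by (simp add: algebra_simps)
  also have "\<dots> = int (k choose a) * int (m choose b) * Lf a b n k"
    unfolding A B Lf_def m_def[symmetric] by (simp add: algebra_simps)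
  finally show ?thesis unfolding m_def .
qed

lemma sign_prop:
  assumes "j \<le> k" "Gf (Suc a) (Suc b) n (Suc j) < Gf (Suc a) (Suc b) n j"
  shows "Gf (Suc a) (Suc b) n (Suc k) \<le> Gf (Suc a) (Suc b) n k"
proof (cases "k < n")
  case False
  then show ?thesis by (simp add: Gf_big)
next
  case True
  then have jn: "j < n" using assms by simp
  let ?d = "\<lambda>k. Gf (Suc a) (Suc b) n (Suc k) - Gf (Suc a) (Suc b) n k"
  have pos: "int (Suc a) * int (Suc b) > 0" by simp
  have "int (Suc a) * int (Suc b) * ?d j < 0" using assms(2) pos by (simp add: mult_pos_neg)
  then have "int (j choose a) * int ((n - j - 1) choose b) * Lf a b n j < 0" using ident[OF jn] by simp
  then have Lj: "Lf a b n j < 0"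
    by (metis mult_nonneg_nonneg not_less of_nat_0_le_iff)
  have h1: "int (Suc a) * int (n - k - 1) \<le> int (Suc a) * int (n - j - 1)"
    by (rule mult_left_mono) (use assms(1) in auto)
  have h2: "int (Suc b) * int j \<le> int (Suc b) * int k"
    by (rule mult_left_mono) (use assms(1) in auto)
  have "Lf a b n k \<le> Lf a b n j" unfolding Lf_def right_diff_distrib using h1 h2 by linarith
  then have "Lf a b n k < 0" using Lj by simp
  then have "int (k choose a) * int ((n - k - 1) choose b) * Lf a b n k \<le> 0"
    by (simp add: mult_nonneg_nonpos)
  then have "int (Suc a) * int (Suc b) * ?d k \<le> 0" using ident[OF True] by simp
  then have "?d k \<le> 0" using pos by (simp add: mult_le_0_iff)
  then show ?thesis by simp
qed



lemma step_prop:
  assumes ab: "a \<noteq> 0 \<or> b \<noteq> 0" and n: "a + b + 4 \<le> n"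
  shows "Gf (Suc a) (Suc b) n (Suc k) - Gf (Suc a) (Suc b) n k \<noteq> 1
       \<and> Gf (Suc a) (Suc b) n (Suc k) - Gf (Suc a) (Suc b) n k \<noteq> -1"
proof -
  define d where "d = Gf (Suc a) (Suc b) n (Suc k) - Gf (Suc a) (Suc b) n k"
  have "d = 0 \<or> d \<ge> 2 \<or> d \<le> -2"
  proof (cases "k < n")
    case False
    then show ?thesis by (simp add: d_def Gf_big)
  next
    case True
    define m where "m = n - k - 1"
    have nk: "n - k = Suc m" "n - Suc k = m" using True m_def by auto
    have G0: "Gf (Suc a) (Suc b) n k = int ((k choose Suc a) * (Suc m choose Suc b))"
      using nk by (simp add: Gf_def)
    have G1: "Gf (Suc a) (Suc b) n (Suc k) = int ((Suc k choose Suc a) * (m choose Suc b))"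
      using nk by (simp add: Gf_def)
    consider "k < a" | "k = a" | "m < b" | "m = b" | "a < k" "b < m" by linarith
    then show ?thesis
    proof cases
      case 1
      then show ?thesis unfolding d_def G0 G1 by (simp add: binomial_eq_0)
    next
      case 2
      have "n - Suc a \<le> n - Suc a choose Suc b" by (rule binom_ge) (use n in auto)
      then have "2 \<le> m choose Suc b" using 2 nk n by auto
      then show ?thesis unfolding d_def G0 G1 using 2 by (simp add: binomial_eq_0)
    next
      case 3
      then show ?thesis unfolding d_def G0 G1 by (simp add: binomial_eq_0)
    next
      case 4
      have "k \<le> k choose Suc a" by (rule binom_ge) (use n 4 m_def in auto)
      then have "2 \<le> k choose Suc a" using n 4 m_def by auto
      then show ?thesis unfolding d_def G0 G1 using 4 by (simp add: binomial_eq_0)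
    next
      case 5
      show ?thesis
      proof (rule ccontr)
        assume "\<not> ?thesis"
        then have d1: "\<bar>d\<bar> = 1" by linarith
        define u where "u = k choose a"
        define v where "v = m choose b"
        define L where "L = Lf a b n k"
        have "0 < u" unfolding u_def using 5 by (intro zero_less_binomial) simp
        then have u1: "u \<ge> 1" by simp
        have "0 < v" unfolding v_def using 5 by (intro zero_less_binomial) simp
        then have v1: "v \<ge> 1" by simp
        have "int (Suc a) * int (Suc b) * d = int u * int v * L"
          using ident[OF True, of a b] unfolding d_def u_def v_def L_def m_def by simp
        then have "\<bar>int (Suc a) * int (Suc b) * d\<bar> = \<bar>int u * int v * L\<bar>" by simp
        then have E: "int (Suc a) * int (Suc b) = int u * int v * \<bar>L\<bar>"
          using d1 by (simp add: abs_mult)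
        have L0: "\<bar>L\<bar> \<ge> 1" using E by (cases "L = 0") auto
        have Lgen: "L = int (Suc a) * (int m - int b) - int (Suc b) * (int k - int a)"
          unfolding L_def Lf_def m_def by simp
        have km: "k + m + 1 = n" using nk True by simp
        have uvL: "int u * int v \<le> int u * int v * \<bar>L\<bar>" using L0 u1 v1 by simp
        consider "a \<ge> 1" "b \<ge> 1" | "a = 0" "b \<ge> 1" | "b = 0" "a \<ge> 1" using ab by linarith
        then show False
        proof cases
          case 1
          have uk: "k \<le> u" unfolding u_def by (rule binom_ge) (use 1 5 in auto)
          have vm: "m \<le> v" unfolding v_def by (rule binom_ge) (use 1 5 in auto)
          have "Suc a * Suc b < k * m"
          proof (cases "Suc (Suc a) \<le> k")
            case True
            have "Suc a * Suc b < Suc (Suc a) * Suc b" by simp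
            also have "\<dots> \<le> k * m" using True 5 by (intro mult_mono) auto
            finally show ?thesis .
          next
            case False
            then have "k = Suc a" using 5 by simp
            then have "Suc (Suc b) \<le> m" using km n by simp
            have "Suc a * Suc b < Suc a * Suc (Suc b)" by simp
            also have "\<dots> \<le> k * m" using \<open>k = Suc a\<close> \<open>Suc (Suc b) \<le> m\<close> by (intro mult_mono) auto
            finally show ?thesis .
          qed
          also have "k * m \<le> u * v" using uk vm by (intro mult_mono) auto
          finally have "int (Suc a) * int (Suc b) < int u * int v"
            by (metis of_nat_less_iff of_nat_mult)
          then show False using E uvL by linarith
        next
          case 2
          have u_1: "u = 1" using 2 by (simp add: u_def)
          show False
          proof (cases "Suc (Suc b) \<le> m")
            case True
            have "m \<le> v" unfolding v_def by (rule binom_ge) (use 2 5 in auto)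
            then have "int (Suc b) < int v" using True by simp
            moreover have "int (Suc b) = int v * \<bar>L\<bar>" using E u_1 2 by simp
            moreover have "int v \<le> int v * \<bar>L\<bar>" using uvL u_1 by simp
            ultimately show False by linarith
          next
            case False
            then have mb: "m = Suc b" using 5 by simp
            then have vb: "v = Suc b" by (simp add: v_def)
            have k3: "k \<ge> 2" using km n mb 2 by simp
            have "L = 1 - int (Suc b) * int k" using Lgen mb 2 by simp
            moreover have "int (Suc b) * int k \<ge> int (Suc b) * 2" using k3 by (intro mult_left_mono) auto
            ultimately have "L \<le> -2" using 2 by simp
            then have "\<bar>L\<bar> \<ge> 2" by simp
            then have "int v * \<bar>L\<bar> \<ge> int v * 2" using vb by (intro mult_left_mono) auto
            then show False using E u_1 2 vb by simp
          qed
        next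
          case 3
          have v_1: "v = 1" using 3 by (simp add: v_def)
          have uk: "k \<le> u" unfolding u_def by (rule binom_ge) (use 3 5 in auto)
          show False
          proof (cases "Suc (Suc a) \<le> k")
            case True
            then have "int (Suc a) < int u" using uk by simp
            moreover have "int (Suc a) = int u * \<bar>L\<bar>" using E v_1 3 by simp
            moreover have "int u \<le> int u * \<bar>L\<bar>" using uvL v_1 by simp
            ultimately show False by linarith
          next
            case False
            then have ka: "k = Suc a" using 5 by simp
            then have ua: "u = Suc a" by (simp add: u_def)
            have m3: "m \<ge> 2" using km n ka 3 by simp
            have "L = int (Suc a) * int m - 1" using Lgen ka 3 by (simp add: algebra_simps)
            moreover have "int (Suc a) * int m \<ge> int (Suc a) * 2" using m3 by (intro mult_left_mono) auto
            ultimately have "L \<ge> 2" using 3 by simp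
            then have "\<bar>L\<bar> \<ge> 2" by simp
            then have "int u * \<bar>L\<bar> \<ge> int u * 2" using ua by (intro mult_left_mono) auto
            then show False using E v_1 3 ua by simp
          qed
        qed
      qed
    qed
  qed
  then show ?thesis unfolding d_def by linarith
qed



lemma runs2:
  "length (remdups_adj p) = 2 \<Longrightarrow> \<exists>a b x. a \<ge> 1 \<and> b \<ge> 1 \<and> p = replicate a x @ replicate b (\<not>x)"
proof (induction p rule: remdups_adj.induct)
  case 1 then show ?case by simp
next
  case (2 x) then show ?case by simp
next
  case (3 x y xs)
  show ?case
  proof (cases "x = y")
    case True
    then have "length (remdups_adj (y#xs)) = 2" using 3 by simp
    then obtain a b z where abz: "a \<ge> 1" "b \<ge> 1" "y#xs = replicate a z @ replicate b (\<not>z)"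
      using 3 True by blast
    then obtain a0 where a0: "a = Suc a0" by (cases a) auto
    then have "z = y" using abz by simp
    then have "x#y#xs = replicate (Suc a) z @ replicate b (\<not>z)" using abz True by simp
    moreover have "1 \<le> Suc a" by simp
    ultimately show ?thesis using abz(2) by blast
  next
    case False
    then have "length (remdups_adj (y#xs)) = Suc 0" using 3 by simp
    then have "y#xs = replicate (length (y#xs)) (hd (y#xs))" using remdups_adj_singleton_iff by blast
    then have "y#xs = replicate (length (y#xs)) y" by simp
    moreover have "y = (\<not>x)" using False by auto
    ultimately have "x#y#xs = replicate 1 x @ replicate (length (y#xs)) (\<not>x)" by simp
    moreover have "(1::nat) \<le> 1" "1 \<le> length (y#xs)" by simp_all
    ultimately show ?thesis by blast
  qed
qed

lemma finite_len: "finite {w :: bool list. length w = n \<and> P w}"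
proof -
  have "finite {w :: bool list. set w \<subseteq> UNIV \<and> length w = n}"
    by (rule finite_lists_length_eq) simp
  then show ?thesis by (rule finite_subset[rotated]) auto
qed

lemma main_core:
  fixes x :: bool and a' b' n :: nat
  defines "p \<equiv> replicate (Suc a') x @ replicate (Suc b') (\<not>x)"
  assumes ab: "a' \<noteq> 0 \<or> b' \<noteq> 0" and n: "a' + b' + 4 \<le> n"
  shows "Bcount n p (Mmax n p - 1) = 0 \<and> has_internal_zero p n"
proof -
  define a where "a = Suc a'"
  define b where "b = Suc b'"
  define g where "g = Gf a b n"
  have p_def': "p = replicate a x @ replicate b (\<not>x)" unfolding p_def a_def b_def ..
  have occ_eq: "\<And>w. occ p w = cnt p w" by (rule occ_cnt)
  define V where "V = {occ p w | w :: bool list. length w = n}"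
  define M where "M = Mmax n p"
  have MV: "M = Max V" unfolding M_def V_def Mmax_def ..
  have finV: "finite V"
  proof -
    have "V = (occ p) ` {w. length w = n \<and> True}" unfolding V_def by auto
    then show ?thesis using finite_len[of n "\<lambda>_. True"] by simp
  qed
  have sorted_occ: "int (occ p (replicate k x @ replicate (n - k) (\<not>x))) = g k" if "k \<le> n" for k
    by (simp add: occ_cnt p_def' g_def Gf_def cnt_sorted)
  have sorted_V: "occ p (replicate k x @ replicate (n - k) (\<not>x)) \<in> V" if "k \<le> n" for k
    unfolding V_def using that by auto
  have neV: "V \<noteq> {}" using sorted_V[of 0] by auto
  have MinV: "M \<in> V" using MV finV neV by simp
  have leM: "v \<le> M" if "v \<in> V" for v using MV finV that by simp
  have cnt_sum: "count_list w (\<not>x) = n - count_list w x" if "length w = n" for w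
    using count_sum[of w x] that by simp
  have ub: "int (occ p w) \<le> g (count_list w x)" if "length w = n" for w
  proof -
    have "cnt p w \<le> (count_list w x choose a) * (count_list w (\<not>x) choose b)"
      using cnt_bound[of b a x w] unfolding p_def' b_def by simp
    then have "occ p w \<le> (count_list w x choose a) * ((n - count_list w x) choose b)"
      using cnt_sum[OF that] occ_eq by simp
    then show ?thesis unfolding g_def Gf_def by (metis of_nat_le_iff)
  qed
  have gbig: "g k = 0" if "n < k" for k unfolding g_def b_def using that by (simp add: Gf_big)
  have gM: "g k \<le> int M" for k
  proof (cases "k \<le> n")
    case True
    then show ?thesis using sorted_occ[OF True] leM[OF sorted_V[OF True]] by simp
  next
    case False then show ?thesis using gbig by simp
  qed
  obtain ws where ws: "length ws = n" "occ p ws = M" using MinV unfolding V_def by auto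
  define ks where "ks = count_list ws x"
  have gks: "g ks = int M" using ub[OF ws(1)] ws(2) gM[of ks] unfolding ks_def by simp
  have notM1: "g k \<noteq> int M - 1" for k
  proof (rule seq_abs[of g "int M" ks k])
    show "\<And>k. g (Suc k) - g k \<noteq> 1" "\<And>k. g (Suc k) - g k \<noteq> -1"
      unfolding g_def a_def b_def using step_prop[OF ab n] by auto
    show "\<And>j k. j \<le> k \<Longrightarrow> g (Suc j) < g j \<Longrightarrow> g (Suc k) \<le> g k"
      unfolding g_def a_def b_def by (rule sign_prop)
  qed (use gM gks in auto)
  have ga: "g a \<ge> 2"
  proof -
    have "n - a \<le> n - a choose b" by (rule binom_ge) (use n a_def b_def in auto)
    then show ?thesis unfolding g_def Gf_def using n a_def by simp
  qed
  have M2: "M \<ge> 2" using ga gM[of a] by simp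
  have empty: "{w :: bool list. length w = n \<and> occ p w = M - 1} = {}"
  proof (rule ccontr)
    assume "\<not> ?thesis"
    then obtain w where w: "length w = n" "occ p w = M - 1" by auto
    define kx where "kx = count_list w x"
    define ky where "ky = count_list w (\<not>x)"
    have kxy: "ky = n - kx" "kx \<le> n" unfolding kx_def ky_def using cnt_sum[OF w(1)] w(1) count_le_length by auto
    show False
    proof (cases "ok x w")
      case True
      then have "w = replicate kx x @ replicate (n - kx) (\<not>x)"
        using ok_sorted[OF True] kxy unfolding kx_def ky_def by simp
      then have "int (occ p w) = g kx" using sorted_occ[OF kxy(2)] by simp
      then show False using notM1[of kx] w(2) M2 by simp
    next
      case False
      define pen where "pen = (kx - 1 choose a') * (ky - 1 choose b')"
      have "cnt p w + pen \<le> (kx choose a) * (ky choose b)"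
        using cnt_bound[of b a x w] False unfolding p_def' pen_def kx_def ky_def a_def b_def by simp
      then have "occ p w + pen \<le> (kx choose a) * ((n - kx) choose b)" using kxy occ_eq by simp
      then have bnd: "int (occ p w) + int pen \<le> g kx"
        unfolding g_def Gf_def by (metis of_nat_add of_nat_le_iff)
      have "g kx \<le> int M" by (rule gM)
      moreover have "g kx \<noteq> int M - 1" by (rule notM1)
      ultimately consider "g kx \<le> int M - 2" | "g kx = int M" by linarith
      then show False
      proof cases
        case 1
        then show False using bnd w(2) M2 by simp
      next
        case 2
        have "pen \<ge> 2"
        proof (rule ccontr)
          assume pen1: "\<not> pen \<ge> 2"
          have "0 < g kx" using 2 M2 by simp
          then have "0 < (kx choose a) * (ky choose b)"
            unfolding g_def Gf_def using kxy by (metis of_nat_0_less_iff)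
          then have c1: "0 < kx choose a" and c2: "0 < ky choose b" by auto
          have kxa: "a \<le> kx" using c1 zero_less_binomial_iff by blast
          have kyb: "b \<le> ky" using c2 zero_less_binomial_iff by blast
          have uv: "u = 1 \<and> v = 1" if "0 < u" "0 < v" "\<not> 2 \<le> u * v" for u v :: nat
          proof -
            have "u * 1 \<le> u * v" using that by (intro mult_le_mono) auto
            moreover have "1 * v \<le> u * v" using that by (intro mult_le_mono) auto
            ultimately show ?thesis using that by linarith
          qed
          have "0 < kx - 1 choose a'" using kxa a_def by (intro zero_less_binomial) simp
          moreover have "0 < ky - 1 choose b'" using kyb b_def by (intro zero_less_binomial) simp
          ultimately have e1: "kx - 1 choose a' = 1" and e2: "ky - 1 choose b' = 1"
            using uv pen1 unfolding pen_def by blast+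
          have A: "a' = 0 \<or> kx - 1 = a'"
          proof (rule ccontr)
            assume nt: "\<not> (a' = 0 \<or> kx - 1 = a')"
            then have "kx - 1 \<le> kx - 1 choose a'" using kxa a_def by (intro binom_ge) auto
            then show False using e1 nt kxa a_def by arith
          qed
          have B: "b' = 0 \<or> ky - 1 = b'"
          proof (rule ccontr)
            assume nt: "\<not> (b' = 0 \<or> ky - 1 = b')"
            then have "ky - 1 \<le> ky - 1 choose b'" using kyb b_def by (intro binom_ge) auto
            then show False using e2 nt kyb b_def by arith
          qed
          consider "kx - 1 = a'" "ky - 1 = b'" | "a' = 0" "b' \<noteq> 0" "ky - 1 = b'" | "b' = 0" "a' \<noteq> 0" "kx - 1 = a'"
            using A B ab by blast
          then show False
          proof cases
            case 1
            then show False using kxy kxa kyb a_def b_def n by simp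
          next
            case 3
            then have kx: "kx = a" using kxa a_def by simp
            have "g kx = int (n - a)" unfolding g_def Gf_def kx b_def 3 by simp
            moreover have "g (Suc a) = int (Suc a * (n - Suc a))" unfolding g_def Gf_def b_def 3 by simp
            moreover have "Suc a * (n - Suc a) > n - a"
            proof -
              define t where "t = n - Suc a"
              have t2: "t \<ge> 2" using n a_def 3 t_def by simp
              have "3 * t \<le> Suc a * t" using 3 a_def by (intro mult_right_mono) auto
              moreover have "n - a = t + 1" using n a_def t_def by simp
              ultimately show ?thesis unfolding t_def[symmetric] using t2 by linarith
            qed
            ultimately have "g (Suc a) > g kx" by (metis of_nat_less_iff)
            then show False using 2 gM[of "Suc a"] by simp
          next
            case 2
            then have ky: "ky = b" using kyb b_def by simp
            then have kx: "kx = n - b" using kxy by simp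
            have "g kx = int (n - b)" unfolding g_def Gf_def kx a_def 2 using n b_def by simp
            moreover have "g (n - Suc b) = int ((n - Suc b) * Suc b)"
            proof -
              have "n - (n - Suc b) = Suc b" using n b_def by simp
              then show ?thesis unfolding g_def Gf_def a_def 2 by simp
            qed
            moreover have "(n - Suc b) * Suc b > n - b"
            proof -
              define t where "t = n - Suc b"
              have t2: "t \<ge> 2" using n b_def 2 t_def by simp
              have "t * 3 \<le> t * Suc b" using 2 b_def by (intro mult_left_mono) auto
              moreover have "n - b = t + 1" using n b_def t_def by simp
              ultimately show ?thesis unfolding t_def[symmetric] using t2 by linarith
            qed
            ultimately have "g (n - Suc b) > g kx" by (metis of_nat_less_iff)
            then show False using 2 gM[of "n - Suc b"] \<open>g kx = int M\<close> by simp
          qed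
        qed
        then show False using bnd w(2) M2 2 by simp
      qed
    qed
  qed
  have part1: "Bcount n p (M - 1) = 0" unfolding Bcount_def empty by simp
  have B0: "Bcount n p 0 \<noteq> 0"
  proof -
    have "occ p (replicate n (\<not>x)) = 0"
      unfolding p_def occ_cnt by (simp add: cnt_zero)
    then have "replicate n (\<not>x) \<in> {w. length w = n \<and> occ p w = 0}" by simp
    then show ?thesis unfolding Bcount_def using finite_len[of n "\<lambda>w. occ p w = 0"]
      by (metis card_0_eq empty_iff)
  qed
  have BM: "Bcount n p M \<noteq> 0"
  proof -
    have "ws \<in> {w. length w = n \<and> occ p w = M}" using ws by simp
    then show ?thesis unfolding Bcount_def using finite_len[of n "\<lambda>w. occ p w = M"]
      by (metis card_0_eq empty_iff)
  qed
  have "has_internal_zero p n" unfolding has_internal_zero_def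
    using B0 BM part1 M2 by (intro exI[of _ 0] exI[of _ "M - 1"] exI[of _ M]) auto
  then show ?thesis using part1 unfolding M_def by simp
qed


theorem mainTheorem16:
  fixes p :: "bool list" and n :: nat
  assumes "num_runs p = 2" and "length p \<ge> 3" and "n \<ge> length p + 2"
  shows "Bcount n p (Mmax n p - 1) = 0 \<and> has_internal_zero p n"
proof -
  obtain a b x where abx: "a \<ge> 1" "b \<ge> 1" "p = replicate a x @ replicate b (\<not>x)"
    using runs2 assms(1) unfolding num_runs_def by blast
  obtain a' where a': "a = Suc a'" using abx by (cases a) auto
  obtain b' where b': "b = Suc b'" using abx by (cases b) auto
  have lp: "length p = a + b" using abx by simp
  have ab: "a' \<noteq> 0 \<or> b' \<noteq> 0" using assms(2) lp a' b' by auto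
  have nn: "a' + b' + 4 \<le> n" using assms(3) lp a' b' by simp
  show ?thesis using main_core[OF ab nn, of x] abx(3) a' b' by simp
qed

end
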